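(* Let $A\subseteq\mathbb{R}^n$ be finite (Euclidean metric) and $\beta>0$. For all $r,k>0$, $$\mathrm{DCr}^\beta_{r,k}(A)\subseteq\mathrm{Cr}^\beta_{r,k}(A)\subseteq\mathrm{DCr}^\beta_{(2\beta+1)r,k}(A).$$
   Context: $d$ is the Euclidean metric and $\bar B_d(x,r)=\{y:d(x,y)\le r\}$. For finite $A\subseteq\mathbb{R}^n$, $k>0$, $x\in\mathbb{R}^n$, the $k$-core distance $\mathrm{core}^A_k(x)$ is the distance from $x$ to its $\lceil k\rceil$-th nearest neighbor in $A$ (each point of $A$ counted once, $x$ itself counting if $x\in A$); equivalently $\min\{r\ge0:|\bar B_d(x,r)\cap A|\ge k\}$, and $\infty$ if $k>|A|$. For $\beta>0$: $\Lambda^\beta_k(a,x)=\max\{\beta\,\mathrm{core}^A_k(a),d(a,x)\}$, $B^\beta_{r,k}(a)=\{x:\Lambda^\beta_k(a,x)\le r\}$, core bifiltration $\mathrm{Cr}^\beta_{r,k}(A)=\bigcup_{a\in A}B^\beta_{r,k}(a)$. The Voronoi cell of $a\in A$ is $\mathrm{Vor}_A(a)=\{x\in\mathbb{R}^n: d(a,x)\le d(a',x)\text{ for all }a'\in A\}$. The Delaunay core bifiltration is $\mathrm{DCr}^\beta_{r,k}(A)=\bigcup_{a\in A}\big(B^\beta_{r,k}(a)\cap\mathrm{Vor}_A(a)\big)$. *)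

theory Defs
  imports "HOL-Analysis.Analysis" "HOL-Library.Extended_Real"
begin

text \<open>k-core distance: least r \<ge> 0 such that the closed ball of radius r about x
  contains at least k points of A; infinity if no such r exists (i.e. k > card A).\<close>
definition core_dist :: "('a::metric_space) set \<Rightarrow> real \<Rightarrow> 'a \<Rightarrow> ereal" where
  "core_dist A k x = Inf {ereal r | r. r \<ge> 0 \<and> real (card (cball x r \<inter> A)) \<ge> k}"

definition Lambda :: "('a::metric_space) set \<Rightarrow> real \<Rightarrow> real \<Rightarrow> 'a \<Rightarrow> 'a \<Rightarrow> ereal" where
  "Lambda A \<beta> k a x = max (ereal \<beta> * core_dist A k a) (ereal (dist a x))"

definition core_ball :: "('a::metric_space) set \<Rightarrow> real \<Rightarrow> real \<Rightarrow> real \<Rightarrow> 'a \<Rightarrow> 'a set" where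
  "core_ball A \<beta> r k a = {x. Lambda A \<beta> k a x \<le> ereal r}"

definition core_bifiltration :: "('a::metric_space) set \<Rightarrow> real \<Rightarrow> real \<Rightarrow> real \<Rightarrow> 'a set" where
  "core_bifiltration A \<beta> r k = (\<Union>a\<in>A. core_ball A \<beta> r k a)"

definition voronoi_cell :: "('a::metric_space) set \<Rightarrow> 'a \<Rightarrow> 'a set" where
  "voronoi_cell A a = {x. \<forall>a'\<in>A. dist a x \<le> dist a' x}"

definition delaunay_core_bifiltration :: "('a::metric_space) set \<Rightarrow> real \<Rightarrow> real \<Rightarrow> real \<Rightarrow> 'a set" where
  "delaunay_core_bifiltration A \<beta> r k = (\<Union>a\<in>A. core_ball A \<beta> r k a \<inter> voronoi_cell A a)"

end

theory Submission
  imports Defs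
begin

lemma core_lip:
  fixes A :: "('a::metric_space) set"
  assumes "finite A"
  shows "core_dist A k b \<le> core_dist A k a + ereal (dist a b)"
proof -
  define Sa where "Sa = {ereal r | r. r \<ge> 0 \<and> real (card (cball a r \<inter> A)) \<ge> k}"
  define Sb where "Sb = {ereal r | r. r \<ge> 0 \<and> real (card (cball b r \<inter> A)) \<ge> k}"
  have ca: "core_dist A k a = Inf Sa" and cb: "core_dist A k b = Inf Sb"
    unfolding core_dist_def Sa_def Sb_def by auto
  show ?thesis
  proof (cases "Sa = {}")
    case True then show ?thesis by (simp add: ca cb top_ereal_def)
  next
    case False
    have "Inf Sa + ereal (dist a b) = (INF s\<in>Sa. s + ereal (dist a b))"
      using False by (subst INF_ereal_add_left) (auto simp: Sa_def)
    also have "Inf Sb \<le> \<dots>"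
    proof (rule INF_greatest)
      fix s assume "s \<in> Sa"
      then obtain r where r: "s = ereal r" "r \<ge> 0" "real (card (cball a r \<inter> A)) \<ge> k"
        unfolding Sa_def by auto
      have sub: "cball a r \<inter> A \<subseteq> cball b (r + dist a b) \<inter> A"
        proof
        fix y assume "y \<in> cball a r \<inter> A"
        then have "dist a y \<le> r" "y \<in> A" by auto
        moreover have "dist b y \<le> dist b a + dist a y" by (rule dist_triangle)
        ultimately show "y \<in> cball b (r + dist a b) \<inter> A" by (simp add: dist_commute)
      qed
      have "card (cball a r \<inter> A) \<le> card (cball b (r + dist a b) \<inter> A)"
        by (rule card_mono[OF _ sub]) (use assms in auto)
      then have "ereal (r + dist a b) \<in> Sb" unfolding Sb_def using r by force
      then show "Inf Sb \<le> s + ereal (dist a b)" using r by (auto intro: Inf_lower)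
    qed
    finally show ?thesis by (simp add: ca cb)
  qed
qed

theorem mainTheorem5:
  fixes A :: "(real ^ 'n) set" and \<beta> r k :: real
  assumes "finite A" and "\<beta> > 0" and "r > 0" and "k > 0"
  shows "delaunay_core_bifiltration A \<beta> r k \<subseteq> core_bifiltration A \<beta> r k
    \<and> core_bifiltration A \<beta> r k \<subseteq> delaunay_core_bifiltration A \<beta> ((2 * \<beta> + 1) * r) k"
proof
  show "delaunay_core_bifiltration A \<beta> r k \<subseteq> core_bifiltration A \<beta> r k"
    unfolding delaunay_core_bifiltration_def core_bifiltration_def by blast
next
  show "core_bifiltration A \<beta> r k \<subseteq> delaunay_core_bifiltration A \<beta> ((2 * \<beta> + 1) * r) k"
  proof
    fix x assume "x \<in> core_bifiltration A \<beta> r k"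
    then obtain a where aA: "a \<in> A" and L: "Lambda A \<beta> k a x \<le> ereal r"
      unfolding core_bifiltration_def core_ball_def by auto
    have c1: "ereal \<beta> * core_dist A k a \<le> ereal r" and d1: "dist a x \<le> r"
      using L unfolding Lambda_def by auto
    define m where "m = Min ((\<lambda>y. dist y x) ` A)"
    have "m \<in> (\<lambda>y. dist y x) ` A" unfolding m_def using assms(1) aA by (intro Min_in) auto
    then obtain a' where a'A: "a' \<in> A" and m: "dist a' x = m" by auto
    have vor: "\<forall>y\<in>A. dist a' x \<le> dist y x" using m assms(1) unfolding m_def by auto
    then have d2: "dist a' x \<le> r" using aA d1 by force
    have daa: "dist a a' \<le> 2 * r"
      using dist_triangle[of a a' x] vor aA d1 by (auto simp: dist_commute)
    have cl: "core_dist A k a' \<le> core_dist A k a + ereal (dist a a')"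
      by (rule core_lip[OF assms(1)])
    have "ereal \<beta> * core_dist A k a' \<le> ereal \<beta> * (core_dist A k a + ereal (dist a a'))"
      using cl assms(2) by (intro ereal_mult_left_mono) auto
    also have "\<dots> = ereal \<beta> * core_dist A k a + ereal (\<beta> * dist a a')"
      by (subst ereal_distrib_left) auto
    also have "\<dots> \<le> ereal r + ereal (\<beta> * (2 * r))"
      using c1 daa assms(2) by (intro add_mono) auto
    also have "\<dots> = ereal ((2 * \<beta> + 1) * r)" by (simp add: algebra_simps)
    finally have c2: "ereal \<beta> * core_dist A k a' \<le> ereal ((2 * \<beta> + 1) * r)" .
    have "dist a' x \<le> (2 * \<beta> + 1) * r" proof -
      have "0 \<le> \<beta> * (2 * r)" using assms by simp
      then show ?thesis using d2 by (simp add: algebra_simps)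
    qed
    then have "Lambda A \<beta> k a' x \<le> ereal ((2 * \<beta> + 1) * r)"
      unfolding Lambda_def using c2 by auto
    then show "x \<in> delaunay_core_bifiltration A \<beta> ((2 * \<beta> + 1) * r) k"
      unfolding delaunay_core_bifiltration_def core_ball_def voronoi_cell_def
      using a'A vor by auto
  qed
qed

end
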